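(* In the two-project discovery model described in the context, suppose the principal's payoff is $1$ if the grand bundle $S=\{1,2\}$ is proposed and approved and $0$ otherwise, and suppose $\mu_1+\mu_2<0$. Then, when discovering only one project, if $\sigma_i>\sigma_j$ ($\{i,j\}=\{1,2\}$) discovering project $i$ is preferred to discovering project $j$ (i.e., the higher-variance project is always preferred). Moreover, discovering both project values is strictly better (yields strictly higher expected payoff) than discovering either project value individually.
   Context: Model. There are two projects $i\in\{1,2\}$. The agent's values $v=(v_1,v_2)\in\mathbb{R}^2$ are drawn from a common prior that is bivariate normal with means $\mu_1,\mu_2$, standard deviations $\sigma_1,\sigma_2>0$ and correlation $\rho\in(0,1)$. Timing: (1) the principal chooses which project values to publicly discover (project 1's value, project 2's value, or both); (2) the chosen values are publicly revealed and the agent forms a posterior by Bayes' rule (so after observing $v_i$, the agent's posterior on $v_j$ is normal with mean $\mu_j+\rho(\sigma_j/\sigma_i)(v_i-\mu_i)$); (3) knowing the revealed values, the principal proposes a subset $S\subseteq\{1,2\}$; (4) the agent approves iff $\sum_{i\in S}\mathbb{E}[v_i\mid\text{revealed information}]\ge 0$. The principal chooses the proposal to maximize her payoff given the revealed information, and compares discovery rules by ex-ante expected payoff. *)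

theory Defs
  imports "HOL-Probability.Probability"
begin

definition binorm_density :: "real \<Rightarrow> real \<Rightarrow> real \<Rightarrow> real \<Rightarrow> real \<Rightarrow> real \<times> real \<Rightarrow> real" where
  "binorm_density m1 m2 s1 s2 r = (\<lambda>(v1, v2).
     let x1 = (v1 - m1) / s1; x2 = (v2 - m2) / s2 in
     exp (- (x1\<^sup>2 - 2 * r * x1 * x2 + x2\<^sup>2) / (2 * (1 - r\<^sup>2)))
       / (2 * pi * s1 * s2 * sqrt (1 - r\<^sup>2)))"

definition prior :: "real \<Rightarrow> real \<Rightarrow> real \<Rightarrow> real \<Rightarrow> real \<Rightarrow> (real \<times> real) measure" where
  "prior m1 m2 s1 s2 r = density lborel (\<lambda>v. ennreal (binorm_density m1 m2 s1 s2 r v))"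

datatype discovery = Disc1 | Disc2 | DiscBoth

text \<open>Posterior mean of each project's value given the publicly revealed information,
as a function of the realized values (Bayes' rule for the bivariate normal).\<close>
definition post_mean :: "real \<Rightarrow> real \<Rightarrow> real \<Rightarrow> real \<Rightarrow> real \<Rightarrow> discovery \<Rightarrow> real \<times> real \<Rightarrow> nat \<Rightarrow> real" where
  "post_mean m1 m2 s1 s2 r d v i = (case d of
      Disc1 \<Rightarrow> (if i = 1 then fst v else m2 + r * (s2 / s1) * (fst v - m1))
    | Disc2 \<Rightarrow> (if i = 2 then snd v else m1 + r * (s1 / s2) * (snd v - m2))
    | DiscBoth \<Rightarrow> (if i = 1 then fst v else snd v))"

definition approves :: "(nat \<Rightarrow> real) \<Rightarrow> nat set \<Rightarrow> bool" where
  "approves e S \<longleftrightarrow> (\<Sum>i\<in>S. e i) \<ge> 0"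

definition grand_payoff :: "nat set \<Rightarrow> bool \<Rightarrow> real" where
  "grand_payoff S approved = (if S = {1, 2} \<and> approved then 1 else 0)"

definition principal_value :: "(nat \<Rightarrow> real) \<Rightarrow> real" where
  "principal_value e = Max ((\<lambda>S. grand_payoff S (approves e S)) ` Pow {1, 2})"

definition expected_payoff :: "real \<Rightarrow> real \<Rightarrow> real \<Rightarrow> real \<Rightarrow> real \<Rightarrow> discovery \<Rightarrow> real" where
  "expected_payoff m1 m2 s1 s2 r d =
     (\<integral>v. principal_value (post_mean m1 m2 s1 s2 r d v) \<partial>(prior m1 m2 s1 s2 r))"

end

theory Submission
  imports Defs
begin


definition T :: "real \<Rightarrow> ennreal" where
  "T a = (\<integral>\<^sup>+ z. ennreal (std_normal_density z) * indicator {a..} z \<partial>lborel)"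

lemma nn_normal_one: "\<sigma> > 0 \<Longrightarrow> (\<integral>\<^sup>+ x. ennreal (normal_density \<mu> \<sigma> x) \<partial>lborel) = 1"
  by (subst nn_integral_eq_integral) auto

lemma T_le1: "T a \<le> 1"
proof -
  have "T a \<le> (\<integral>\<^sup>+ z. ennreal (std_normal_density z) \<partial>lborel)"
    unfolding T_def by (intro nn_integral_mono) (auto simp: indicator_def)
  thus ?thesis using nn_normal_one[of 1 0] by simp
qed

lemma stdz:
  assumes s: "\<sigma> > 0"
  shows "(\<integral>\<^sup>+ x. ennreal (normal_density \<mu> \<sigma> x) * indicator {a..} ((x-\<mu>)/\<sigma>) \<partial>lborel) = T a"
proof -
  have "(\<integral>\<^sup>+ x. ennreal (normal_density \<mu> \<sigma> x) * indicator {a..} ((x-\<mu>)/\<sigma>) \<partial>lborel)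
    = ennreal \<bar>\<sigma>\<bar> * (\<integral>\<^sup>+ z. ennreal (normal_density \<mu> \<sigma> (\<mu> + \<sigma> * z)) * indicator {a..} ((\<mu> + \<sigma> * z-\<mu>)/\<sigma>) \<partial>lborel)"
    by (rule nn_integral_real_affine) (use s in auto)
  also have "\<dots> = (\<integral>\<^sup>+ z. ennreal \<sigma> * (ennreal (normal_density \<mu> \<sigma> (\<mu> + \<sigma> * z)) * indicator {a..} ((\<mu> + \<sigma> * z-\<mu>)/\<sigma>)) \<partial>lborel)"
    using s by (subst nn_integral_cmult) auto
  also have "\<dots> = T a"
    unfolding T_def
  proof (intro nn_integral_cong)
    fix z :: real
    have e1: "normal_density \<mu> \<sigma> (\<mu> + \<sigma> * z) = std_normal_density z / \<sigma>"
      using s unfolding normal_density_def by (simp add: real_sqrt_mult power_mult_distrib field_simps)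
    have e2: "indicator {a..} ((\<mu> + \<sigma> * z-\<mu>)/\<sigma>) = (indicator {a..} z :: ennreal)"
      using s by (simp add: indicator_def)
    show "ennreal \<sigma> * (ennreal (normal_density \<mu> \<sigma> (\<mu> + \<sigma> * z)) * indicator {a..} ((\<mu> + \<sigma> * z-\<mu>)/\<sigma>)) = ennreal (std_normal_density z) * indicator {a..} z"
      unfolding e1 e2 using s by (simp add: ennreal_mult''[symmetric] mult.assoc[symmetric])
  qed
  finally show ?thesis .
qed

lemma T_strict:
  assumes ab: "a < b"
  shows "T b < T a"
proof -
  define P where "P = (\<integral>\<^sup>+ z. ennreal (std_normal_density z) * indicator {a..<b} z \<partial>lborel)"
  have split: "T a = P + T b"
    unfolding T_def P_def
    by (subst nn_integral_add[symmetric]) (use ab in \<open>auto intro!: nn_integral_cong simp: indicator_def\<close>)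
  define c0 where "c0 = exp (- (a\<^sup>2 + b\<^sup>2) / 2) / sqrt (2 * pi)"
  have c0: "c0 > 0" unfolding c0_def by simp
  have "(\<integral>\<^sup>+ z. ennreal c0 * indicator {a..<b} z \<partial>lborel) \<le> P"
    unfolding P_def
  proof (intro nn_integral_mono)
    fix z :: real
    show "ennreal c0 * indicator {a..<b} z \<le> ennreal (std_normal_density z) * indicator {a..<b} z"
    proof (cases "z \<in> {a..<b}")
      case True
      then have "\<bar>z\<bar> \<le> \<bar>a\<bar> \<or> \<bar>z\<bar> \<le> \<bar>b\<bar>" by auto
      then have "z\<^sup>2 \<le> a\<^sup>2 \<or> z\<^sup>2 \<le> b\<^sup>2" by (simp add: abs_le_square_iff)
      then have "z\<^sup>2 \<le> a\<^sup>2 + b\<^sup>2"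
        using zero_le_power2[of a] zero_le_power2[of b] by linarith
      then have "c0 \<le> std_normal_density z"
        unfolding c0_def std_normal_density_def by (simp add: divide_right_mono)
      then show ?thesis using True by (simp add: ennreal_leI)
    qed simp
  qed
  moreover have "(\<integral>\<^sup>+ z. ennreal c0 * indicator {a..<b} z \<partial>lborel) = ennreal c0 * ennreal (b - a)"
    using ab by (simp add: nn_integral_cmult_indicator)
  moreover have "ennreal c0 * ennreal (b - a) > 0"
    using ab c0 by (simp add: ennreal_mult''[symmetric] )
  ultimately have Ppos: "P > 0" by order
  have "T b < top" using T_le1[of b] ennreal_one_less_top by (rule le_less_trans)
  then have "T b \<noteq> top" by simp
  then have "T b + 0 < T b + P" using Ppos by (simp only: ennreal_add_left_cancel_less) simp
  then show ?thesis unfolding split by (simp add: add.commute)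
qed



lemma quad1:
  fixes x y m1 m2 s1 s2 r q :: real
  assumes "s1 \<noteq> 0" "s2 \<noteq> 0" "q = 1 - r\<^sup>2" "q \<noteq> 0"
  shows "- (((x - m1) / s1)\<^sup>2 - 2 * r * ((x - m1) / s1) * ((y - m2) / s2) + ((y - m2) / s2)\<^sup>2) / (2 * q)
     = - (x - m1)\<^sup>2 / (2 * s1\<^sup>2) + - (y - (m2 + r * (s2 / s1) * (x - m1)))\<^sup>2 / (2 * (s2\<^sup>2 * q))"
  using assms by (simp add: field_simps power2_eq_square) algebra

lemma P: fixes a b s1 s2 r :: real shows
 "(a+b)\<^sup>2 * s1\<^sup>2 * s2\<^sup>2 * (1-r\<^sup>2) + (a* s2*(s2+r* s1) - b* s1*(s1+r* s2))\<^sup>2 = (s1\<^sup>2 + s2\<^sup>2 + 2 * r * s1 * s2) * (a\<^sup>2* s2\<^sup>2 - 2*r*a*b* s1* s2 + b\<^sup>2* s1\<^sup>2)"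
  by algebra

lemma L1: fixes a b s1 s2 r :: real assumes "s1 \<noteq> 0" "s2 \<noteq> 0" "q \<noteq> 0" shows
 "- ((a / s1)\<^sup>2 - 2 * r * (a / s1) * (b / s2) + (b / s2)\<^sup>2) / (2 * q) = - (a\<^sup>2* s2\<^sup>2 - 2*r*a*b* s1* s2 + b\<^sup>2* s1\<^sup>2) / (2 * (s1\<^sup>2 * s2\<^sup>2 * q))"
  using assms by (simp add: field_simps power2_eq_square)

lemma L2: fixes a b s1 s2 r :: real assumes "s1 \<noteq> 0" "s2 \<noteq> 0" "q \<noteq> 0" "S2 \<noteq> 0" "S2 = s1\<^sup>2 + s2\<^sup>2 + 2 * r * s1 * s2" shows
 "a - (s1\<^sup>2 + r * s1 * s2) / S2 * (a + b) = (a* s2*(s2+r* s1) - b* s1*(s1+r* s2)) / S2"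
  using assms by (simp add: field_simps power2_eq_square) 

lemma L3: fixes a b s1 s2 r :: real assumes "s1 \<noteq> 0" "s2 \<noteq> 0" "q \<noteq> 0" "S2 \<noteq> 0" shows
 "- (a + b)\<^sup>2 / (2 * S2) + - (X / S2)\<^sup>2 / (2 * (s1\<^sup>2 * s2\<^sup>2 * q / S2)) = - ((a+b)\<^sup>2 * s1\<^sup>2 * s2\<^sup>2 * q + X\<^sup>2) / (2 * (S2 * (s1\<^sup>2 * s2\<^sup>2 * q)))"
  using assms by (simp add: field_simps power2_eq_square) 

lemma quad3b:
  fixes a b s1 s2 r q S2 :: real
  assumes "s1 \<noteq> 0" "s2 \<noteq> 0" "q = 1 - r\<^sup>2" "q \<noteq> 0" "S2 = s1\<^sup>2 + s2\<^sup>2 + 2 * r * s1 * s2" "S2 \<noteq> 0"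
  shows "- ((a / s1)\<^sup>2 - 2 * r * (a / s1) * (b / s2) + (b / s2)\<^sup>2) / (2 * q)
     = - (a + b)\<^sup>2 / (2 * S2) + - (a - (s1\<^sup>2 + r * s1 * s2) / S2 * (a + b))\<^sup>2 / (2 * (s1\<^sup>2 * s2\<^sup>2 * q / S2))"
proof -
  define X where "X = a* s2*(s2+r* s1) - b* s1*(s1+r* s2)"
  define N where "N = a\<^sup>2* s2\<^sup>2 - 2*r*a*b* s1* s2 + b\<^sup>2* s1\<^sup>2"
  have "- (a + b)\<^sup>2 / (2 * S2) + - (a - (s1\<^sup>2 + r * s1 * s2) / S2 * (a + b))\<^sup>2 / (2 * (s1\<^sup>2 * s2\<^sup>2 * q / S2))
     = - (a + b)\<^sup>2 / (2 * S2) + - (X / S2)\<^sup>2 / (2 * (s1\<^sup>2 * s2\<^sup>2 * q / S2))"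
    unfolding X_def using L2[of s1 s2 q S2 r a b] assms by simp
  also have "\<dots> = - ((a+b)\<^sup>2 * s1\<^sup>2 * s2\<^sup>2 * q + X\<^sup>2) / (2 * (S2 * (s1\<^sup>2 * s2\<^sup>2 * q)))"
    by (rule L3) (use assms in auto)
  also have "(a+b)\<^sup>2 * s1\<^sup>2 * s2\<^sup>2 * q + X\<^sup>2 = S2 * N"
    unfolding X_def N_def assms(3) assms(5) by (rule P)
  also have "- (S2 * N) / (2 * (S2 * (s1\<^sup>2 * s2\<^sup>2 * q))) = - N / (2 * (s1\<^sup>2 * s2\<^sup>2 * q))"
    using assms(6) by simp
  also have "\<dots> = - ((a / s1)\<^sup>2 - 2 * r * (a / s1) * (b / s2) + (b / s2)\<^sup>2) / (2 * q)"
    unfolding N_def by (rule L1[symmetric]) (use assms in auto)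
  finally show ?thesis by simp
qed

lemma quad3:
  fixes x w m1 m2 s1 s2 r q S2 :: real
  assumes "s1 \<noteq> 0" "s2 \<noteq> 0" "q = 1 - r\<^sup>2" "q \<noteq> 0" "S2 = s1\<^sup>2 + s2\<^sup>2 + 2 * r * s1 * s2" "S2 \<noteq> 0"
  shows "- (((x - m1) / s1)\<^sup>2 - 2 * r * ((x - m1) / s1) * ((w - x - m2) / s2) + ((w - x - m2) / s2)\<^sup>2) / (2 * q)
     = - (w - (m1 + m2))\<^sup>2 / (2 * S2) + - (x - (m1 + (s1\<^sup>2 + r * s1 * s2) / S2 * (w - (m1 + m2))))\<^sup>2 / (2 * (s1\<^sup>2 * s2\<^sup>2 * q / S2))"
proof -
  have d: "(x - m1) + (w - x - m2) = w - (m1 + m2)" by simp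
  have e: "x - (m1 + (s1\<^sup>2 + r * s1 * s2) / S2 * (w - (m1 + m2))) = (x - m1) - (s1\<^sup>2 + r * s1 * s2) / S2 * (w - (m1 + m2))" by simp
  show ?thesis using quad3b[OF assms, of "x - m1" "w - x - m2"] unfolding d e .
qed

lemma sqrt_2pi: "\<sigma> > 0 \<Longrightarrow> sqrt (2 * pi * \<sigma>\<^sup>2) = sqrt (2 * pi) * \<sigma>"
  by (simp add: real_sqrt_mult)

lemma nd_prod:
  assumes "\<sigma>1 > 0" "\<sigma>2 > 0"
  shows "exp (- (x1 - \<mu>1)\<^sup>2 / (2 * \<sigma>1\<^sup>2) + - (x2 - \<mu>2)\<^sup>2 / (2 * \<sigma>2\<^sup>2)) / (2 * pi * (\<sigma>1 * \<sigma>2))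
    = normal_density \<mu>1 \<sigma>1 x1 * normal_density \<mu>2 \<sigma>2 x2"
proof -
  have "sqrt (2 * pi) * sqrt (2 * pi) = 2 * pi" by simp
  then show ?thesis
    unfolding normal_density_def sqrt_2pi[OF assms(1)] sqrt_2pi[OF assms(2)] exp_add
    using assms by (simp add: field_simps)
qed

lemma fact1:
  assumes s1: "s1 > 0" and s2: "s2 > 0" and r: "0 < r" "r < 1"
  shows "binorm_density m1 m2 s1 s2 r (x, y) =
    normal_density m1 s1 x * normal_density (m2 + r * (s2 / s1) * (x - m1)) (s2 * sqrt (1 - r\<^sup>2)) y"
proof -
  define q where "q = 1 - r\<^sup>2"
  have q: "q > 0" unfolding q_def using r by (simp add: power_less_one_iff abs_less_iff)
  have sq: "(s2 * sqrt q)\<^sup>2 = s2\<^sup>2 * q" using q by (simp add: power_mult_distrib)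
  have e: "- (((x - m1) / s1)\<^sup>2 - 2 * r * ((x - m1) / s1) * ((y - m2) / s2) + ((y - m2) / s2)\<^sup>2) / (2 * q)
     = - (x - m1)\<^sup>2 / (2 * s1\<^sup>2) + - (y - (m2 + r * (s2 / s1) * (x - m1)))\<^sup>2 / (2 * (s2 * sqrt q)\<^sup>2)"
    unfolding sq by (rule quad1) (use s1 s2 q q_def in auto)
  have "binorm_density m1 m2 s1 s2 r (x, y) = exp (- (((x - m1) / s1)\<^sup>2 - 2 * r * ((x - m1) / s1) * ((y - m2) / s2) + ((y - m2) / s2)\<^sup>2) / (2 * q)) / (2 * pi * (s1 * (s2 * sqrt q)))"
    unfolding binorm_density_def Let_def q_def by (simp add: mult.assoc)
  also have "\<dots> = normal_density m1 s1 x * normal_density (m2 + r * (s2 / s1) * (x - m1)) (s2 * sqrt q) y"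
    unfolding e by (rule nd_prod) (use s1 s2 q in auto)
  finally show ?thesis unfolding q_def .
qed

lemma fact2:
  assumes s1: "s1 > 0" and s2: "s2 > 0" and r: "0 < r" "r < 1"
  shows "binorm_density m1 m2 s1 s2 r (x, y) =
    normal_density m2 s2 y * normal_density (m1 + r * (s1 / s2) * (y - m2)) (s1 * sqrt (1 - r\<^sup>2)) x"
proof -
  have "binorm_density m1 m2 s1 s2 r (x, y) = binorm_density m2 m1 s2 s1 r (y, x)"
  proof -
    have h: "\<And>A B :: real. A\<^sup>2 - 2 * r * A * B + B\<^sup>2 = B\<^sup>2 - 2 * r * B * A + A\<^sup>2" by (simp add: algebra_simps)
    have h2: "2 * pi * s1 * s2 * sqrt (1 - r\<^sup>2) = 2 * pi * s2 * s1 * sqrt (1 - r\<^sup>2)" by simp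
    show ?thesis unfolding binorm_density_def Let_def split h2 by (subst h) (rule refl)
  qed
  then show ?thesis using fact1[OF s2 s1 r, of m2 m1 y x] by simp
qed

lemma fact3:
  assumes s1: "s1 > 0" and s2: "s2 > 0" and r: "0 < r" "r < 1"
  defines "S \<equiv> sqrt (s1\<^sup>2 + s2\<^sup>2 + 2 * r * s1 * s2)"
  shows "S > 0" and "binorm_density m1 m2 s1 s2 r (x, w - x) =
    normal_density (m1 + m2) S w * normal_density (m1 + (s1\<^sup>2 + r * s1 * s2) / S\<^sup>2 * (w - (m1 + m2))) (s1 * s2 * sqrt (1 - r\<^sup>2) / S) x"
proof -
  define q where "q = 1 - r\<^sup>2"
  define S2 where "S2 = s1\<^sup>2 + s2\<^sup>2 + 2 * r * s1 * s2"
  have q: "q > 0" unfolding q_def using r by (simp add: power_less_one_iff abs_less_iff)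
  have S2: "S2 > 0" unfolding S2_def using s1 s2 r by (simp add: add_pos_pos)
  show Sp: "S > 0" unfolding S_def S2_def[symmetric] using S2 by simp
  have SS: "S\<^sup>2 = S2" unfolding S_def S2_def[symmetric] using S2 by simp
  have sq: "(s1 * s2 * sqrt q / S)\<^sup>2 = s1\<^sup>2 * s2\<^sup>2 * q / S2" using q by (simp add: power_mult_distrib power_divide SS)
  have e: "- (((x - m1) / s1)\<^sup>2 - 2 * r * ((x - m1) / s1) * ((w - x - m2) / s2) + ((w - x - m2) / s2)\<^sup>2) / (2 * q)
     = - (w - (m1 + m2))\<^sup>2 / (2 * S\<^sup>2) + - (x - (m1 + (s1\<^sup>2 + r * s1 * s2) / S\<^sup>2 * (w - (m1 + m2))))\<^sup>2 / (2 * (s1 * s2 * sqrt q / S)\<^sup>2)"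
    unfolding sq SS by (rule quad3) (use s1 s2 q q_def S2 S2_def in auto)
  have pos: "s1 * s2 * sqrt q / S > 0" using s1 s2 q Sp by simp
  have "binorm_density m1 m2 s1 s2 r (x, w - x) = exp (- (((x - m1) / s1)\<^sup>2 - 2 * r * ((x - m1) / s1) * ((w - x - m2) / s2) + ((w - x - m2) / s2)\<^sup>2) / (2 * q)) / (2 * pi * (S * (s1 * s2 * sqrt q / S)))"
    unfolding binorm_density_def Let_def q_def using Sp by (simp add: mult.assoc)
  also have "\<dots> = normal_density (m1 + m2) S w * normal_density (m1 + (s1\<^sup>2 + r * s1 * s2) / S\<^sup>2 * (w - (m1 + m2))) (s1 * s2 * sqrt q / S) x"
    unfolding e by (rule nd_prod) (use Sp pos in auto)
  finally show "binorm_density m1 m2 s1 s2 r (x, w - x) =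
    normal_density (m1 + m2) S w * normal_density (m1 + (s1\<^sup>2 + r * s1 * s2) / S\<^sup>2 * (w - (m1 + m2))) (s1 * s2 * sqrt (1 - r\<^sup>2) / S) x"
    unfolding q_def .
qed



lemma B_meas[measurable]: "binorm_density m1 m2 s1 s2 r \<in> borel_measurable borel"
proof -
  have "binorm_density m1 m2 s1 s2 r \<in> borel_measurable (borel \<Otimes>\<^sub>M borel)"
    unfolding binorm_density_def Let_def split_beta' by measurable
  then show ?thesis by (simp add: borel_prod)
qed

lemma B_comp[measurable]:
  fixes f g :: "'a \<Rightarrow> real"
  assumes [measurable]: "f \<in> borel_measurable N" "g \<in> borel_measurable N"
  shows "(\<lambda>p. binorm_density m1 m2 s1 s2 r (f p, g p)) \<in> borel_measurable N"
proof -
  have "(\<lambda>p. (f p, g p)) \<in> N \<rightarrow>\<^sub>M borel \<Otimes>\<^sub>M borel" by measurable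
  then have "(\<lambda>p. (f p, g p)) \<in> N \<rightarrow>\<^sub>M borel" by (simp add: borel_prod)
  from measurable_compose[OF this B_meas] show ?thesis .
qed

lemma ind_meas1[measurable]:
  fixes g :: "'a \<Rightarrow> real" assumes g: "g \<in> borel_measurable M" shows "(\<lambda>v. indicator {a..} (g v) :: real) \<in> borel_measurable M"
proof -
  have "{a..} \<in> sets (borel :: real measure)" by (simp add: borel_closed)
  from measurable_compose[OF g borel_measurable_indicator[OF this]] show ?thesis by simp
qed

lemma ind_meas2[measurable]:
  fixes g :: "'a \<Rightarrow> real" assumes g: "g \<in> borel_measurable M" shows "(\<lambda>v. indicator {a..} (g v) :: ennreal) \<in> borel_measurable M"
proof -
  have "{a..} \<in> sets (borel :: real measure)" by (simp add: borel_closed)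
  from measurable_compose[OF g borel_measurable_indicator[OF this]] show ?thesis by simp
qed

lemma pv: "principal_value e = (if 0 \<le> e 1 + e 2 then 1 else 0)"
proof -
  have P: "Pow {1::nat, 2} = {{}, {1}, {2}, {1, 2}}" by (auto simp: Pow_def) 
  show ?thesis unfolding principal_value_def P grand_payoff_def approves_def
    by (auto simp: insert_commute)
qed

lemma L_exp:
  fixes g :: "real \<times> real \<Rightarrow> real"
  assumes g[measurable]: "g \<in> borel_measurable borel"
  shows "(\<integral>v. indicator {a..} (g v) \<partial>prior m1 m2 s1 s2 r) =
    enn2real (\<integral>\<^sup>+ x. \<integral>\<^sup>+ y. ennreal (binorm_density m1 m2 s1 s2 r (x, y)) * indicator {a..} (g (x, y)) \<partial>lborel \<partial>lborel)"
proof -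
  have "(\<integral>v. indicator {a..} (g v) \<partial>prior m1 m2 s1 s2 r) = enn2real (\<integral>\<^sup>+ v. ennreal (indicator {a..} (g v)) \<partial>prior m1 m2 s1 s2 r)"
    by (rule integral_eq_nn_integral) (auto simp: prior_def intro!: ind_meas1)
  also have "(\<integral>\<^sup>+ v. ennreal (indicator {a..} (g v)) \<partial>prior m1 m2 s1 s2 r)
     = (\<integral>\<^sup>+ v. ennreal (binorm_density m1 m2 s1 s2 r v) * indicator {a..} (g v) \<partial>lborel)"
    unfolding prior_def by (subst nn_integral_density) (auto simp: ennreal_indicator)
  also have "\<dots> = (\<integral>\<^sup>+ v. ennreal (binorm_density m1 m2 s1 s2 r v) * indicator {a..} (g v) \<partial>(lborel \<Otimes>\<^sub>M lborel))"
    by (simp add: lborel_prod)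
  also have "\<dots> = (\<integral>\<^sup>+ x. \<integral>\<^sup>+ y. ennreal (binorm_density m1 m2 s1 s2 r (x, y)) * indicator {a..} (g (x, y)) \<partial>lborel \<partial>lborel)"
    by (subst lborel.nn_integral_fst[symmetric]) (auto simp: lborel_prod)
  finally show ?thesis .
qed

lemma L_exp2:
  fixes g :: "real \<times> real \<Rightarrow> real"
  assumes g[measurable]: "g \<in> borel_measurable borel"
  shows "(\<integral>v. indicator {a..} (g v) \<partial>prior m1 m2 s1 s2 r) =
    enn2real (\<integral>\<^sup>+ y. \<integral>\<^sup>+ x. ennreal (binorm_density m1 m2 s1 s2 r (x, y)) * indicator {a..} (g (x, y)) \<partial>lborel \<partial>lborel)"
proof -
  have "(\<integral>v. indicator {a..} (g v) \<partial>prior m1 m2 s1 s2 r) = enn2real (\<integral>\<^sup>+ v. ennreal (indicator {a..} (g v)) \<partial>prior m1 m2 s1 s2 r)"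
    by (rule integral_eq_nn_integral) (auto simp: prior_def intro!: ind_meas1)
  also have "(\<integral>\<^sup>+ v. ennreal (indicator {a..} (g v)) \<partial>prior m1 m2 s1 s2 r)
     = (\<integral>\<^sup>+ v. ennreal (binorm_density m1 m2 s1 s2 r v) * indicator {a..} (g v) \<partial>lborel)"
    unfolding prior_def by (subst nn_integral_density) (auto simp: ennreal_indicator)
  also have "\<dots> = (\<integral>\<^sup>+ v. ennreal (binorm_density m1 m2 s1 s2 r v) * indicator {a..} (g v) \<partial>(lborel \<Otimes>\<^sub>M lborel))"
    by (simp add: lborel_prod)
  also have "\<dots> = (\<integral>\<^sup>+ y. \<integral>\<^sup>+ x. ennreal (binorm_density m1 m2 s1 s2 r (x, y)) * indicator {a..} (g (x, y)) \<partial>lborel \<partial>lborel)"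
    by (subst lborel_pair.nn_integral_snd[symmetric]) (auto simp: lborel_prod)
  finally show ?thesis .
qed

lemma prod_meas:
  fixes f :: "real \<times> real \<Rightarrow> real"
  shows "f \<in> borel_measurable (borel \<Otimes>\<^sub>M borel) \<Longrightarrow> f \<in> borel_measurable borel"
  by (simp add: borel_prod)

lemma thr: "K > 0 \<Longrightarrow> (0 \<le> c + K * z) \<longleftrightarrow> (- c / K \<le> (z::real))"
proof -
  assume K: "K > 0"
  have "- (c/K) \<le> z \<longleftrightarrow> -c \<le> z*K" using pos_divide_le_eq[OF K, of "-c" z] by simp
  then show ?thesis by (simp add: mult.commute) (rule iffI; linarith)
qed

lemma inner_factor:
  assumes "\<tau> > 0" and that: "A \<ge> 0"
  shows "(\<integral>\<^sup>+ y. ennreal (A * normal_density \<mu> \<tau> y) * I \<partial>lborel) = ennreal A * I"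
proof -
  have "(\<integral>\<^sup>+ y. ennreal (A * normal_density \<mu> \<tau> y) * I \<partial>lborel) = (\<integral>\<^sup>+ y. (ennreal A * I) * ennreal (normal_density \<mu> \<tau> y) \<partial>lborel)"
    using that by (intro nn_integral_cong) (simp add: ennreal_mult mult_ac)
  also have "\<dots> = (ennreal A * I) * (\<integral>\<^sup>+ y. ennreal (normal_density \<mu> \<tau> y) \<partial>lborel)"
    by (rule nn_integral_cmult) simp
  also have "\<dots> = ennreal A * I" using nn_normal_one[OF assms(1)] by simp
  finally show ?thesis .
qed

lemma E1:
  assumes s1: "s1 > 0" and s2: "s2 > 0" and r: "0 < r" "r < 1"
  shows "expected_payoff m1 m2 s1 s2 r Disc1 = enn2real (T (- (m1 + m2) / (s1 + r * s2)))"
proof -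
  define a where "a = - (m1 + m2) / (s1 + r * s2)"
  have K: "s1 + r * s2 > 0" using s1 s2 r by (simp add: add_pos_pos)
  have c: "principal_value (post_mean m1 m2 s1 s2 r Disc1 v) = indicator {a..} ((fst v - m1) / s1)" for v
  proof -
    have "post_mean m1 m2 s1 s2 r Disc1 v 1 + post_mean m1 m2 s1 s2 r Disc1 v 2
        = (m1 + m2) + (s1 + r * s2) * ((fst v - m1) / s1)"
      unfolding post_mean_def using s1 by (simp add: field_simps)
    then show ?thesis unfolding pv a_def using thr[OF K, of "m1 + m2" "(fst v - m1) / s1"]
      by (simp add: indicator_def)
  qed
  have "expected_payoff m1 m2 s1 s2 r Disc1 = (\<integral>v. indicator {a..} ((fst v - m1) / s1) \<partial>prior m1 m2 s1 s2 r)"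
    unfolding expected_payoff_def c ..
  also have "\<dots> = enn2real (\<integral>\<^sup>+ x. \<integral>\<^sup>+ y. ennreal (binorm_density m1 m2 s1 s2 r (x, y)) * indicator {a..} ((fst (x, y) - m1) / s1) \<partial>lborel \<partial>lborel)"
    by (rule L_exp, rule prod_meas) measurable
  also have "(\<integral>\<^sup>+ x. \<integral>\<^sup>+ y. ennreal (binorm_density m1 m2 s1 s2 r (x, y)) * indicator {a..} ((fst (x, y) - m1) / s1) \<partial>lborel \<partial>lborel)
     = (\<integral>\<^sup>+ x. ennreal (normal_density m1 s1 x) * indicator {a..} ((x - m1) / s1) \<partial>lborel)"
  proof (intro nn_integral_cong)
    fix x :: real
    have tau: "s2 * sqrt (1 - r\<^sup>2) > 0" using s2 r by (simp add: power_less_one_iff abs_less_iff)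
    show "(\<integral>\<^sup>+ y. ennreal (binorm_density m1 m2 s1 s2 r (x, y)) * indicator {a..} ((fst (x, y) - m1) / s1) \<partial>lborel)
      = ennreal (normal_density m1 s1 x) * indicator {a..} ((x - m1) / s1)"
      unfolding fact1[OF s1 s2 r] fst_conv by (rule inner_factor[OF tau]) simp
  qed
  also have "\<dots> = T a" by (rule stdz[OF s1])
  finally show ?thesis unfolding a_def .
qed

lemma E2:
  assumes s1: "s1 > 0" and s2: "s2 > 0" and r: "0 < r" "r < 1"
  shows "expected_payoff m1 m2 s1 s2 r Disc2 = enn2real (T (- (m1 + m2) / (s2 + r * s1)))"
proof -
  define a where "a = - (m1 + m2) / (s2 + r * s1)"
  have K: "s2 + r * s1 > 0" using s1 s2 r by (simp add: add_pos_pos)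
  have c: "principal_value (post_mean m1 m2 s1 s2 r Disc2 v) = indicator {a..} ((snd v - m2) / s2)" for v
  proof -
    have "post_mean m1 m2 s1 s2 r Disc2 v 1 + post_mean m1 m2 s1 s2 r Disc2 v 2
        = (m1 + m2) + (s2 + r * s1) * ((snd v - m2) / s2)"
      unfolding post_mean_def using s2 by (simp add: field_simps)
    then show ?thesis unfolding pv a_def using thr[OF K, of "m1 + m2" "(snd v - m2) / s2"]
      by (simp add: indicator_def)
  qed
  have "expected_payoff m1 m2 s1 s2 r Disc2 = (\<integral>v. indicator {a..} ((snd v - m2) / s2) \<partial>prior m1 m2 s1 s2 r)"
    unfolding expected_payoff_def c ..
  also have "\<dots> = enn2real (\<integral>\<^sup>+ y. \<integral>\<^sup>+ x. ennreal (binorm_density m1 m2 s1 s2 r (x, y)) * indicator {a..} ((snd (x, y) - m2) / s2) \<partial>lborel \<partial>lborel)"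
    by (rule L_exp2, rule prod_meas) measurable
  also have "(\<integral>\<^sup>+ y. \<integral>\<^sup>+ x. ennreal (binorm_density m1 m2 s1 s2 r (x, y)) * indicator {a..} ((snd (x, y) - m2) / s2) \<partial>lborel \<partial>lborel)
     = (\<integral>\<^sup>+ y. ennreal (normal_density m2 s2 y) * indicator {a..} ((y - m2) / s2) \<partial>lborel)"
  proof (intro nn_integral_cong)
    fix y :: real
    have tau: "s1 * sqrt (1 - r\<^sup>2) > 0" using s1 r by (simp add: power_less_one_iff abs_less_iff)
    show "(\<integral>\<^sup>+ x. ennreal (binorm_density m1 m2 s1 s2 r (x, y)) * indicator {a..} ((snd (x, y) - m2) / s2) \<partial>lborel)
      = ennreal (normal_density m2 s2 y) * indicator {a..} ((y - m2) / s2)"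
      unfolding fact2[OF s1 s2 r] snd_conv by (rule inner_factor[OF tau]) simp
  qed
  also have "\<dots> = T a" by (rule stdz[OF s2])
  finally show ?thesis unfolding a_def .
qed

lemma E3:
  assumes s1: "s1 > 0" and s2: "s2 > 0" and r: "0 < r" "r < 1"
  shows "expected_payoff m1 m2 s1 s2 r DiscBoth = enn2real (T (- (m1 + m2) / sqrt (s1\<^sup>2 + s2\<^sup>2 + 2 * r * s1 * s2)))"
proof -
  define S where "S = sqrt (s1\<^sup>2 + s2\<^sup>2 + 2 * r * s1 * s2)"
  define a where "a = - (m1 + m2) / S"
  have Sp: "S > 0" unfolding S_def using fact3(1)[OF s1 s2 r] .
  have c: "principal_value (post_mean m1 m2 s1 s2 r DiscBoth v) = indicator {a..} ((fst v + snd v - (m1 + m2)) / S)" for v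
  proof -
    have "post_mean m1 m2 s1 s2 r DiscBoth v 1 + post_mean m1 m2 s1 s2 r DiscBoth v 2
        = (m1 + m2) + S * ((fst v + snd v - (m1 + m2)) / S)"
      unfolding post_mean_def using Sp by (simp add: field_simps)
    then show ?thesis unfolding pv a_def using thr[OF Sp, of "m1 + m2" "(fst v + snd v - (m1 + m2)) / S"]
      by (simp add: indicator_def)
  qed
  have m: "(\<lambda>(x, w). ennreal (binorm_density m1 m2 s1 s2 r (x, w - x)) * indicator {a..} ((w - (m1 + m2)) / S)) \<in> borel_measurable (lborel \<Otimes>\<^sub>M lborel)"
  proof -
    have "(\<lambda>p. ennreal (binorm_density m1 m2 s1 s2 r (fst p, snd p - fst p)) * indicator {a..} ((snd p - (m1 + m2)) / S)) \<in> borel_measurable (borel \<Otimes>\<^sub>M borel)"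
      by measurable
    then show ?thesis
      by (simp add: split_beta' lborel_prod borel_prod)
  qed
  have "expected_payoff m1 m2 s1 s2 r DiscBoth = (\<integral>v. indicator {a..} ((fst v + snd v - (m1 + m2)) / S) \<partial>prior m1 m2 s1 s2 r)"
    unfolding expected_payoff_def c ..
  also have "\<dots> = enn2real (\<integral>\<^sup>+ x. \<integral>\<^sup>+ y. ennreal (binorm_density m1 m2 s1 s2 r (x, y)) * indicator {a..} ((fst (x, y) + snd (x, y) - (m1 + m2)) / S) \<partial>lborel \<partial>lborel)"
    by (rule L_exp, rule prod_meas) measurable
  also have "(\<integral>\<^sup>+ x. \<integral>\<^sup>+ y. ennreal (binorm_density m1 m2 s1 s2 r (x, y)) * indicator {a..} ((fst (x, y) + snd (x, y) - (m1 + m2)) / S) \<partial>lborel \<partial>lborel)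
     = (\<integral>\<^sup>+ x. \<integral>\<^sup>+ w. ennreal (binorm_density m1 m2 s1 s2 r (x, w - x)) * indicator {a..} ((w - (m1 + m2)) / S) \<partial>lborel \<partial>lborel)"
  proof (rule nn_integral_cong)
    fix x :: real
    have "(\<integral>\<^sup>+ y. ennreal (binorm_density m1 m2 s1 s2 r (x, y)) * indicator {a..} ((fst (x, y) + snd (x, y) - (m1 + m2)) / S) \<partial>lborel)
      = ennreal \<bar>1\<bar> * (\<integral>\<^sup>+ w. ennreal (binorm_density m1 m2 s1 s2 r (x, - x + 1 * w)) * indicator {a..} ((fst (x, - x + 1 * w) + snd (x, - x + 1 * w) - (m1 + m2)) / S) \<partial>lborel)"
      by (rule nn_integral_real_affine) measurable
    then show "(\<integral>\<^sup>+ y. ennreal (binorm_density m1 m2 s1 s2 r (x, y)) * indicator {a..} ((fst (x, y) + snd (x, y) - (m1 + m2)) / S) \<partial>lborel)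
      = (\<integral>\<^sup>+ w. ennreal (binorm_density m1 m2 s1 s2 r (x, w - x)) * indicator {a..} ((w - (m1 + m2)) / S) \<partial>lborel)"
      by simp
  qed
  also have "\<dots> = (\<integral>\<^sup>+ w. \<integral>\<^sup>+ x. ennreal (binorm_density m1 m2 s1 s2 r (x, w - x)) * indicator {a..} ((w - (m1 + m2)) / S) \<partial>lborel \<partial>lborel)"
    using lborel_pair.Fubini'[OF m] by simp
  also have "\<dots> = (\<integral>\<^sup>+ w. ennreal (normal_density (m1 + m2) S w) * indicator {a..} ((w - (m1 + m2)) / S) \<partial>lborel)"
  proof (intro nn_integral_cong)
    fix w :: real
    have tau: "s1 * s2 * sqrt (1 - r\<^sup>2) / S > 0" using s1 s2 r Sp by (simp add: power_less_one_iff abs_less_iff)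
    show "(\<integral>\<^sup>+ x. ennreal (binorm_density m1 m2 s1 s2 r (x, w - x)) * indicator {a..} ((w - (m1 + m2)) / S) \<partial>lborel)
      = ennreal (normal_density (m1 + m2) S w) * indicator {a..} ((w - (m1 + m2)) / S)"
      unfolding fact3(2)[OF s1 s2 r] S_def[symmetric] by (rule inner_factor[OF tau]) simp
  qed
  also have "\<dots> = T a" by (rule stdz[OF Sp])
  finally show ?thesis unfolding a_def S_def .
qed

lemma T_real_strict:
  assumes "a < b" shows "enn2real (T b) < enn2real (T a)"
proof -
  have ta: "T a < top" using T_le1[of a] ennreal_one_less_top by (rule le_less_trans)
  have tb: "T b < top" using T_le1[of b] ennreal_one_less_top by (rule le_less_trans)
  have "T b < ennreal (enn2real (T a))" using T_strict[OF assms] ta by (simp add: ennreal_enn2real_if)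
  then show ?thesis using tb by simp
qed

lemma thr_lt:
  fixes c x y :: real
  assumes "c > 0" "0 < y" "y < x" shows "c / x < c / y"
  using assms by (intro divide_strict_left_mono) auto

lemma sqrt_gt:
  fixes s1 s2 r :: real
  assumes s1: "s1 > 0" and s2: "s2 > 0" and r: "0 < r" "r < 1"
  shows "s1 + r * s2 < sqrt (s1\<^sup>2 + s2\<^sup>2 + 2 * r * s1 * s2)"
proof -
  have q: "r\<^sup>2 < 1" using r by (simp add: power_less_one_iff abs_less_iff)
  have "s1\<^sup>2 + s2\<^sup>2 + 2 * r * s1 * s2 - (s1 + r * s2)\<^sup>2 = s2\<^sup>2 * (1 - r\<^sup>2)"
    by (simp add: power2_eq_square algebra_simps)
  also have "\<dots> > 0" using s2 q by simp
  finally have "(s1 + r * s2)\<^sup>2 < s1\<^sup>2 + s2\<^sup>2 + 2 * r * s1 * s2" by simp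
  then have "sqrt ((s1 + r * s2)\<^sup>2) < sqrt (s1\<^sup>2 + s2\<^sup>2 + 2 * r * s1 * s2)" by (rule real_sqrt_less_mono)
  then show ?thesis using s1 s2 r by simp
qed

theorem proposition2:
  fixes m1 m2 s1 s2 r :: real
  assumes "s1 > 0" and "s2 > 0" and "0 < r" and "r < 1"
    and "m1 + m2 < 0"
  shows "(s1 > s2 \<longrightarrow> expected_payoff m1 m2 s1 s2 r Disc1 > expected_payoff m1 m2 s1 s2 r Disc2)
       \<and> (s2 > s1 \<longrightarrow> expected_payoff m1 m2 s1 s2 r Disc2 > expected_payoff m1 m2 s1 s2 r Disc1)
       \<and> expected_payoff m1 m2 s1 s2 r DiscBoth > expected_payoff m1 m2 s1 s2 r Disc1
       \<and> expected_payoff m1 m2 s1 s2 r DiscBoth > expected_payoff m1 m2 s1 s2 r Disc2"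
proof -
  note s1 = assms(1) and s2 = assms(2) and r = assms(3,4)
  define c where "c = - (m1 + m2)"
  have c: "c > 0" unfolding c_def using assms(5) by simp
  define S where "S = sqrt (s1\<^sup>2 + s2\<^sup>2 + 2 * r * s1 * s2)"
  have e1: "expected_payoff m1 m2 s1 s2 r Disc1 = enn2real (T (c / (s1 + r * s2)))"
    unfolding c_def using E1[OF s1 s2 r] by simp
  have e2: "expected_payoff m1 m2 s1 s2 r Disc2 = enn2real (T (c / (s2 + r * s1)))"
    unfolding c_def using E2[OF s1 s2 r] by simp
  have e3: "expected_payoff m1 m2 s1 s2 r DiscBoth = enn2real (T (c / S))"
    unfolding c_def S_def using E3[OF s1 s2 r] by simp
  have p1: "0 < s1 + r * s2" using s1 s2 r by (simp add: add_pos_pos)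
  have p2: "0 < s2 + r * s1" using s1 s2 r by (simp add: add_pos_pos)
  have S1: "s1 + r * s2 < S" unfolding S_def by (rule sqrt_gt[OF s1 s2 r])
  have S2: "s2 + r * s1 < S" unfolding S_def using sqrt_gt[OF s2 s1 r] by (simp add: algebra_simps)
  have A: "s1 > s2 \<longrightarrow> expected_payoff m1 m2 s1 s2 r Disc1 > expected_payoff m1 m2 s1 s2 r Disc2"
  proof
    assume "s1 > s2"
    then have "(1 - r) * (s1 - s2) > 0" using r by simp
    moreover have "(s1 + r * s2) - (s2 + r * s1) = (1 - r) * (s1 - s2)" by (simp add: algebra_simps)
    ultimately have "s2 + r * s1 < s1 + r * s2" by linarith
    then have "c / (s1 + r * s2) < c / (s2 + r * s1)" by (rule thr_lt[OF c p2])
    then show "expected_payoff m1 m2 s1 s2 r Disc1 > expected_payoff m1 m2 s1 s2 r Disc2"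
      unfolding e1 e2 by (rule T_real_strict)
  qed
  have B: "s2 > s1 \<longrightarrow> expected_payoff m1 m2 s1 s2 r Disc2 > expected_payoff m1 m2 s1 s2 r Disc1"
  proof
    assume "s2 > s1"
    then have "(1 - r) * (s2 - s1) > 0" using r by simp
    moreover have "(s2 + r * s1) - (s1 + r * s2) = (1 - r) * (s2 - s1)" by (simp add: algebra_simps)
    ultimately have "s1 + r * s2 < s2 + r * s1" by linarith
    then have "c / (s2 + r * s1) < c / (s1 + r * s2)" by (rule thr_lt[OF c p1])
    then show "expected_payoff m1 m2 s1 s2 r Disc2 > expected_payoff m1 m2 s1 s2 r Disc1"
      unfolding e1 e2 by (rule T_real_strict)
  qed
  have C: "expected_payoff m1 m2 s1 s2 r DiscBoth > expected_payoff m1 m2 s1 s2 r Disc1"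
    unfolding e1 e3 by (rule T_real_strict, rule thr_lt[OF c p1 S1])
  have D: "expected_payoff m1 m2 s1 s2 r DiscBoth > expected_payoff m1 m2 s1 s2 r Disc2"
    unfolding e2 e3 by (rule T_real_strict, rule thr_lt[OF c p2 S2])
  show ?thesis using A B C D by blast
qed

end
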